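(* Let $n\geq 2$. Every cluster of $n$-permutations contains exactly one pair of twin permutations (i.e., exactly one unordered pair $\{\pi,\sigma\}$ of twins with both $\pi$ and $\sigma$ in the cluster).
   Context: An $n$-permutation is a permutation $\pi_1\cdots\pi_n$ of $\{1,\ldots,n\}$. For a word $w$ of distinct numbers, $\mathrm{red}(w)$ is the permutation obtained by replacing the $i$-th smallest letter by $i$. For an $(n-1)$-permutation $\tau$, the cluster with signature $\tau$ is the set of all $n$-permutations $\pi$ with $\mathrm{red}(\pi_1\cdots\pi_{n-1})=\tau$; there are $(n-1)!$ clusters, each with $n$ elements. Two different $n$-permutations $\pi=\pi_1\cdots\pi_n$ and $\sigma=\sigma_1\cdots\sigma_n$ are twins if $\mathrm{red}(\pi_1\cdots\pi_{n-1})=\mathrm{red}(\sigma_1\cdots\sigma_{n-1})$ and $|\pi_n-\pi_1|=|\sigma_n-\sigma_1|=1$. *)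

theory Defs
  imports Main
begin

definition nperm :: "nat \<Rightarrow> nat list \<Rightarrow> bool" where
  "nperm n p \<longleftrightarrow> length p = n \<and> distinct p \<and> set p = {1..n}"

text \<open>red(w): replace the i-th smallest letter by i (the rank of x is the number of letters \<le> x).\<close>
definition red :: "nat list \<Rightarrow> nat list" where
  "red w = map (\<lambda>x. card {y \<in> set w. y \<le> x}) w"

definition cluster :: "nat \<Rightarrow> nat list \<Rightarrow> nat list set" where
  "cluster n tau = {p. nperm n p \<and> red (take (n - 1) p) = tau}"

definition twins :: "nat \<Rightarrow> nat list \<Rightarrow> nat list \<Rightarrow> bool" where
  "twins n p s \<longleftrightarrow> nperm n p \<and> nperm n s \<and> p \<noteq> s
     \<and> red (take (n - 1) p) = red (take (n - 1) s)
     \<and> \<bar>int (p ! (n - 1)) - int (p ! 0)\<bar> = 1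
     \<and> \<bar>int (s ! (n - 1)) - int (s ! 0)\<bar> = 1"

end

theory Submission
  imports Defs
begin

definition fk :: "nat \<Rightarrow> nat \<Rightarrow> nat" where
  "fk k j = (if j < k then j else j + 1)"

lemma fk_mono: "strict_mono (fk k)"
  by (simp add: strict_mono_Suc_iff fk_def)

lemma red_map_mono:
  assumes "strict_mono (f::nat\<Rightarrow>nat)"
  shows "red (map f w) = red w"
proof -
  have "\<And>x. {y \<in> f ` set w. y \<le> f x} = f ` {y \<in> set w. y \<le> x}"
    using strict_mono_less_eq[OF assms] by auto
  moreover have "inj f" using assms strict_mono_imp_inj_on by blast
  ultimately show ?thesis unfolding red_def
    by (simp add: card_image inj_on_subset[of f UNIV])
qed

lemma red_perm:
  assumes "nperm m tau" shows "red tau = tau"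
proof -
  have "\<And>x. x \<in> set tau \<Longrightarrow> card {y \<in> set tau. y \<le> x} = x"
  proof -
    fix x assume "x \<in> set tau"
    then have "{y \<in> set tau. y \<le> x} = {1..x}" using assms by (auto simp: nperm_def)
    then show "card {y \<in> set tau. y \<le> x} = x" by simp
  qed
  then show ?thesis unfolding red_def by (simp add: map_idI)
qed

lemma red_inj:
  assumes "distinct w" "distinct w'" "set w = set w'" "red w = red w'"
  shows "w = w'"
proof -
  have len: "length w = length w'"
    using distinct_card[OF assms(1)] distinct_card[OF assms(2)] assms(3) by simp
  have C: "card {y \<in> set w. y \<le> w ! i} = card {y \<in> set w. y \<le> w' ! i}" if "i < length w" for i
  proof -
    have "red w ! i = red w' ! i" using assms(4) by simp
    then show ?thesis using that len assms(3) by (simp add: red_def)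
  qed
  have gen: "card {y \<in> set w. y \<le> a} < card {y \<in> set w. y \<le> b}"
    if "a < b" "b \<in> set w" for a b
  proof -
    have "{y \<in> set w. y \<le> a} \<subseteq> {y \<in> set w. y \<le> b}" using that by auto
    moreover have "b \<in> {y \<in> set w. y \<le> b}" "b \<notin> {y \<in> set w. y \<le> a}" using that by auto
    ultimately have "{y \<in> set w. y \<le> a} \<subset> {y \<in> set w. y \<le> b}" by blast
    then show ?thesis by (intro psubset_card_mono) auto
  qed
  have lt: False if "i < length w" "w ! i < w' ! i" for i
  proof -
    have "w' ! i \<in> set w" using assms(3) that(1) len nth_mem by (metis)
    then show False using gen[OF that(2)] C[OF that(1)] by simp
  qed
  have gt: False if "i < length w" "w' ! i < w ! i" for i
  proof -
    have "w ! i \<in> set w" using that(1) by simp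
    then show False using gen[OF that(2)] C[OF that(1)] by simp
  qed
  show ?thesis
    by (rule nth_equalityI[OF len]) (meson lt gt linorder_neqE_nat)
qed

lemma split_last_n:
  assumes "nperm n p" "n \<ge> 1"
  shows "p = take (n - 1) p @ [p ! (n - 1)]"
    "set (take (n - 1) p) = {1..n} - {p ! (n - 1)}"
    "distinct (take (n - 1) p)"
proof -
  have L: "length p = n" using assms by (simp add: nperm_def)
  have lt: "n - 1 < length p" using L assms(2) by simp
  have Sn: "Suc (n - 1) = n" using assms(2) by simp
  show e: "p = take (n - 1) p @ [p ! (n - 1)]"
    using take_Suc_conv_app_nth[OF lt] Sn L by simp
  have d: "distinct p" using assms by (simp add: nperm_def)
  show "distinct (take (n - 1) p)" using d by simp
  have sp: "set p = {1..n}" using assms by (simp add: nperm_def)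
  have "distinct (take (n - 1) p @ [p ! (n - 1)])" using d e by simp
  then have nin: "p ! (n - 1) \<notin> set (take (n - 1) p)" by simp
  have "set p = set (take (n - 1) p) \<union> {p ! (n - 1)}" using e by (metis set_append empty_set list.simps(15))
  then show "set (take (n - 1) p) = {1..n} - {p ! (n - 1)}"
    using nin sp by auto
qed

lemma cluster_unique:
  assumes "p \<in> cluster n tau" "q \<in> cluster n tau" "p ! (n - 1) = q ! (n - 1)" "n \<ge> 1"
  shows "p = q"
proof -
  have np: "nperm n p" "nperm n q" and r: "red (take (n - 1) p) = red (take (n - 1) q)"
    using assms by (auto simp: cluster_def)
  have s: "set (take (n - 1) p) = set (take (n - 1) q)"
    using split_last_n(2)[OF np(1) assms(4)] split_last_n(2)[OF np(2) assms(4)] assms(3) by simp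
  have "take (n - 1) p = take (n - 1) q"
    by (rule red_inj[OF split_last_n(3)[OF np(1) assms(4)] split_last_n(3)[OF np(2) assms(4)] s r])
  note T = this
  have "p = take (n - 1) p @ [p ! (n - 1)]" by (rule split_last_n(1)[OF np(1) assms(4)])
  also have "\<dots> = take (n - 1) q @ [q ! (n - 1)]" using T assms(3) by simp
  also have "\<dots> = q" by (rule sym[OF split_last_n(1)[OF np(2) assms(4)]])
  finally show ?thesis .
qed

lemma first_rank:
  assumes "p \<in> cluster n tau" "n \<ge> 2"
  shows "tau ! 0 = (if p ! 0 < p ! (n - 1) then p ! 0 else p ! 0 - 1)"
proof -
  have np: "nperm n p" and r: "red (take (n - 1) p) = tau" using assms by (auto simp: cluster_def)
  let ?w = "take (n - 1) p"
  have S: "set ?w = {1..n} - {p ! (n - 1)}" using split_last_n(2)[OF np] assms by simp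
  have len: "length ?w = n - 1" using np by (simp add: nperm_def)
  have w0: "?w ! 0 = p ! 0" using assms by simp
  have l0: "0 < length ?w" using len assms by simp
  have x: "p ! 0 \<in> set ?w" using nth_mem[OF l0] w0 by simp
  have t: "tau ! 0 = card {y \<in> set ?w. y \<le> p ! 0}"
    using r[symmetric] l0 w0 unfolding red_def by simp
  have lp: "n - 1 < length p" using np assms(2) by (simp add: nperm_def)
  have k1: "p ! (n - 1) \<in> {1..n}" using nth_mem[OF lp] np by (simp add: nperm_def)
  have xin: "p ! 0 \<in> {1..n}" and xk: "p ! 0 \<noteq> p ! (n - 1)" using S x by auto
  have E: "{y \<in> set ?w. y \<le> p ! 0} = {1..p ! 0} - {p ! (n - 1)}"
    unfolding S using xin by (auto simp del: atLeastAtMost_iff) (auto simp: atLeastAtMost_iff)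
  show ?thesis
  proof (cases "p ! 0 < p ! (n - 1)")
    case True
    then have "{1..p ! 0} - {p ! (n - 1)} = {1..p ! 0}" by auto
    then show ?thesis using t E True by simp
  next
    case False
    then have "p ! (n - 1) \<in> {1..p ! 0}" using k1 xk by auto
    then have "card ({1..p ! 0} - {p ! (n - 1)}) = p ! 0 - 1" by (simp add: card_Diff_singleton)
    then show ?thesis using t E False by simp
  qed
qed

definition mkp :: "nat list \<Rightarrow> nat \<Rightarrow> nat list" where
  "mkp tau k = map (fk k) tau @ [k]"

lemma fk_image:
  assumes "k \<in> {1..n}" shows "fk k ` {1..n - 1} = {1..n} - {k}"
proof
  show "fk k ` {1..n - 1} \<subseteq> {1..n} - {k}" using assms by (auto simp: fk_def)
  show "{1..n} - {k} \<subseteq> fk k ` {1..n - 1}"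
  proof
    fix y assume y: "y \<in> {1..n} - {k}"
    show "y \<in> fk k ` {1..n - 1}"
    proof (cases "y < k")
      case True then show ?thesis using y assms by (intro image_eqI[of _ _ y]) (auto simp: fk_def)
    next
      case False then show ?thesis using y assms by (intro image_eqI[of _ _ "y - 1"]) (auto simp: fk_def)
    qed
  qed
qed

lemma mkp_cluster:
  assumes "nperm (n - 1) tau" "k \<in> {1..n}" "n \<ge> 1"
  shows "mkp tau k \<in> cluster n tau"
proof -
  have inj: "inj (fk k)" using fk_mono strict_mono_imp_inj_on by blast
  have len: "length tau = n - 1" using assms by (simp add: nperm_def)
  have st: "set tau = {1..n-1}" and dt: "distinct tau" using assms by (auto simp: nperm_def)
  have "k \<notin> fk k ` {1..n-1}" using fk_image[OF assms(2)] by simp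
  then have "nperm n (mkp tau k)"
    unfolding nperm_def mkp_def using len assms st dt fk_image[OF assms(2)] inj
    by (auto simp: distinct_map inj_on_subset[of _ UNIV])
  moreover have "take (n - 1) (mkp tau k) = map (fk k) tau" using len by (simp add: mkp_def)
  ultimately show ?thesis unfolding cluster_def
    using red_map_mono[OF fk_mono] red_perm[OF assms(1)] by simp
qed

lemma mkp_last: "length tau = n - 1 \<Longrightarrow> mkp tau k ! (n - 1) = k"
  by (simp add: mkp_def nth_append)

lemma mkp_first: "tau \<noteq> [] \<Longrightarrow> mkp tau k ! 0 = fk k (tau ! 0)"
  by (cases tau) (simp_all add: mkp_def)

theorem lemma1:
  fixes n :: nat and tau :: "nat list"
  assumes "n \<ge> 2" and "nperm (n - 1) tau"
  shows "card {{p, s} | p s. p \<in> cluster n tau \<and> s \<in> cluster n tau \<and> twins n p s} = 1"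
proof -
  have len: "length tau = n - 1" using assms by (simp add: nperm_def)
  have ne: "tau \<noteq> []" using len assms by auto
  define t where "t = tau ! 0"
  have "tau ! 0 \<in> set tau" using ne by simp
  then have tr: "t \<in> {1..n-1}" using assms(2) unfolding t_def nperm_def by simp
  define A where "A = mkp tau t"
  define B where "B = mkp tau (Suc t)"
  have Ac: "A \<in> cluster n tau" unfolding A_def using mkp_cluster assms tr by auto
  have Bc: "B \<in> cluster n tau" unfolding B_def using mkp_cluster assms tr by auto
  have Al: "A ! (n - 1) = t" "A ! 0 = Suc t"
    unfolding A_def using mkp_last[OF len] mkp_first[OF ne] by (auto simp: fk_def t_def)
  have Bl: "B ! (n - 1) = Suc t" "B ! 0 = t"
    unfolding B_def using mkp_last[OF len] mkp_first[OF ne] by (auto simp: fk_def t_def)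
  have AB: "A \<noteq> B" using Al(1) Bl(1) by (metis n_not_Suc_n)
  have tw: "twins n A B" using Ac Bc AB Al Bl unfolding twins_def cluster_def by simp
  have mem: "p = A \<or> p = B" if "p \<in> cluster n tau" "\<bar>int (p ! (n - 1)) - int (p ! 0)\<bar> = 1" for p
  proof -
    have "t = (if p ! 0 < p ! (n - 1) then p ! 0 else p ! 0 - 1)"
      using first_rank[OF that(1) assms(1)] t_def by simp
    then have "p ! (n - 1) = t \<or> p ! (n - 1) = Suc t" using that(2) by (auto split: if_splits)
    moreover have "p ! (n - 1) = t \<Longrightarrow> p = A" using cluster_unique[OF that(1) Ac] Al assms(1) by simp
    moreover have "p ! (n - 1) = Suc t \<Longrightarrow> p = B" using cluster_unique[OF that(1) Bc] Bl assms(1) by simp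
    ultimately show ?thesis by blast
  qed
  have "{{p, s} | p s. p \<in> cluster n tau \<and> s \<in> cluster n tau \<and> twins n p s} = {{A, B}}"
  proof
    show "{{A, B}} \<subseteq> {{p, s} | p s. p \<in> cluster n tau \<and> s \<in> cluster n tau \<and> twins n p s}"
      using Ac Bc tw by blast
    show "{{p, s} | p s. p \<in> cluster n tau \<and> s \<in> cluster n tau \<and> twins n p s} \<subseteq> {{A, B}}"
    proof
      fix X assume "X \<in> {{p, s} | p s. p \<in> cluster n tau \<and> s \<in> cluster n tau \<and> twins n p s}"
      then obtain p s where X: "X = {p, s}" "p \<in> cluster n tau" "s \<in> cluster n tau" "twins n p s" by blast
      have tt: "p \<noteq> s" "\<bar>int (p ! (n - 1)) - int (p ! 0)\<bar> = 1" "\<bar>int (s ! (n - 1)) - int (s ! 0)\<bar> = 1"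
        using X(4) unfolding twins_def by blast+
      have "p = A \<or> p = B" "s = A \<or> s = B" "p \<noteq> s"
        using mem[OF X(2) tt(2)] mem[OF X(3) tt(3)] tt(1) by blast+
      then show "X \<in> {{A, B}}" using X(1) by auto
    qed
  qed
  then show ?thesis by simp
qed

end
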